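(* Let $F$ be a PLSEM-function and $\sigma$ a permutation of $\{1,\dots,p\}$. For $x\in\mathbb{R}^p$ let $\Pi^\sigma_{i+1}(x)$ be the orthogonal projection onto $\mathrm{span}\{\partial_{\sigma^{-1}(i+1)}F(x),\dots,\partial_{\sigma^{-1}(p)}F(x)\}$ for $i<p$ and $\Pi^\sigma_{p+1}:=0$. If $(\mathrm{Id}-\Pi^\sigma_{i+1}(x))\,\partial^2_{\sigma^{-1}(i)}F(x)=0$ for all $x\in\mathbb{R}^p$ and $i=1,\dots,p$, then the matrices $\Pi^\sigma_{i+1}(x)$ and the vectors $(\mathrm{Id}-\Pi^\sigma_{i+1}(x))\,\partial_{\sigma^{-1}(i)}F(x)$ do not depend on $x$, for $i=1,\dots,p$.
   Context: A PLSEM with DAG $D$ on $\{1,\dots,p\}$ is a system $X_j=\mu_j+\sum_{i\in\mathrm{pa}_D(j)} f_{j,i}(X_i)+\varepsilon_j$, $j=1,\dots,p$, where $\mu_j\in\mathbb{R}$, $f_{j,i}\in C^2(\mathbb{R})$, $f_{j,i}\not\equiv 0$, $\mathbb{E}[f_{j,i}(X_i)]=0$, and $\varepsilon_1,\dots,\varepsilon_p$ are mutually independent with $\varepsilon_j\sim\mathcal{N}(0,\sigma_j^2)$, $\sigma_j^2>0$. Its PLSEM-function is $F(x)_j=\frac{1}{\sigma_j}\big(x_j-\mu_j-\sum_{i\in\mathrm{pa}_D(j)}f_{j,i}(x_i)\big)$. $\partial_kF$, $\partial_k^2F$ denote the vectors of first and second partial derivatives of the components of $F$ in $x_k$. *)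

theory Defs
  imports "HOL-Analysis.Analysis" "HOL-Probability.Probability"
begin

text \<open>Nodes of the DAG are the elements of a finite type 'n (p = CARD('n)).
  An edge (i,j) in D means i -> j.\<close>

definition pa :: "('n \<times> 'n) set \<Rightarrow> 'n \<Rightarrow> 'n set" where
  "pa D j = {i. (i, j) \<in> D}"

definition C2 :: "(real \<Rightarrow> real) \<Rightarrow> bool" where
  "C2 g \<longleftrightarrow> (\<exists>g' g''. (\<forall>x. (g has_real_derivative g' x) (at x)) \<and>
                      (\<forall>x. (g' has_real_derivative g'' x) (at x)) \<and> continuous_on UNIV g'')"

text \<open>The PLSEM with DAG D, intercepts mu, functions f j i (= f_{j,i}),
  noise standard deviations s j (= sigma_j > 0), noises eps and variables X
  on the probability space M.\<close>
definition plsem ::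
  "'a measure \<Rightarrow> ('n::finite \<times> 'n) set \<Rightarrow> ('n \<Rightarrow> real) \<Rightarrow> ('n \<Rightarrow> 'n \<Rightarrow> real \<Rightarrow> real)
    \<Rightarrow> ('n \<Rightarrow> real) \<Rightarrow> ('n \<Rightarrow> 'a \<Rightarrow> real) \<Rightarrow> ('n \<Rightarrow> 'a \<Rightarrow> real) \<Rightarrow> bool" where
  "plsem M D mu f s eps X \<longleftrightarrow>
     prob_space M \<and> acyclic D \<and>
     (\<forall>j. s j > 0) \<and>
     prob_space.indep_vars M (\<lambda>_. borel) eps UNIV \<and>
     (\<forall>j. distributed M lborel (eps j) (\<lambda>t. ennreal (normal_density 0 (s j) t))) \<and>
     (\<forall>j. X j \<in> borel_measurable M) \<and>
     (\<forall>j. \<forall>\<omega>\<in>space M. X j \<omega> = mu j + (\<Sum>i\<in>pa D j. f j i (X i \<omega>)) + eps j \<omega>) \<and>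
     (\<forall>j. \<forall>i\<in>pa D j. C2 (f j i) \<and> f j i \<noteq> (\<lambda>_. 0) \<and>
        integrable M (\<lambda>\<omega>. f j i (X i \<omega>)) \<and> integral\<^sup>L M (\<lambda>\<omega>. f j i (X i \<omega>)) = 0)"

definition plsem_fun ::
  "('n::finite \<times> 'n) set \<Rightarrow> ('n \<Rightarrow> real) \<Rightarrow> ('n \<Rightarrow> 'n \<Rightarrow> real \<Rightarrow> real) \<Rightarrow> ('n \<Rightarrow> real)
    \<Rightarrow> real^'n \<Rightarrow> real^'n" where
  "plsem_fun D mu f s x = (\<chi> j. (x $ j - mu j - (\<Sum>i\<in>pa D j. f j i (x $ i))) / s j)"

definition pd :: "'n::finite \<Rightarrow> (real^'n \<Rightarrow> real^'n) \<Rightarrow> real^'n \<Rightarrow> real^'n" where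
  "pd k G x = (\<chi> j. deriv (\<lambda>t. G (\<chi> l. if l = k then t else x $ l) $ j) (x $ k))"

definition pd2 :: "'n::finite \<Rightarrow> (real^'n \<Rightarrow> real^'n) \<Rightarrow> real^'n \<Rightarrow> real^'n" where
  "pd2 k G = pd k (pd k G)"

definition oproj :: "(real^'n::finite) set \<Rightarrow> real^'n \<Rightarrow> real^'n" where
  "oproj S v = (THE w. w \<in> span S \<and> (\<forall>u\<in>span S. inner (v - w) u = 0))"

text \<open>Pi^sigma_m(x) for m = i+1, 1 <= i <= p: projection onto the span of
  pd_{sigma^-1(m)} G x, ..., pd_{sigma^-1(p)} G x; and Pi^sigma_{p+1} = 0.
  Here sigma maps 'n bijectively onto {1..p}.\<close>
definition Pi_sigma :: "('n::finite \<Rightarrow> nat) \<Rightarrow> (real^'n \<Rightarrow> real^'n) \<Rightarrow> nat \<Rightarrow> real^'n \<Rightarrow> real^'n \<Rightarrow> real^'n" where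
  "Pi_sigma \<sigma> G m x = (if m = CARD('n) + 1 then (\<lambda>v. 0)
     else oproj {pd (inv_into UNIV \<sigma> k) G x | k. m \<le> k \<and> k \<le> CARD('n)})"

end

theory Submission
  imports Defs
begin

lemma vec_sum_axis: "(\<chi> j. c j) = (\<Sum>j\<in>UNIV. c j *\<^sub>R axis j (1::real))"
  by (simp add: vec_eq_iff axis_def sum.delta if_distrib cong: if_cong)

lemma vec_has_vector_derivative:
  fixes c :: "real \<Rightarrow> 'n::finite \<Rightarrow> real"
  assumes "\<And>j. ((\<lambda>t. c t j) has_real_derivative c' j) (at \<tau>)"
  shows "((\<lambda>t. \<chi> j. c t j) has_vector_derivative (\<chi> j. c' j)) (at \<tau>)"
proof -
  have "((\<lambda>t. \<Sum>j\<in>UNIV. c t j *\<^sub>R axis j (1::real)) has_vector_derivative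
        (\<Sum>j\<in>UNIV. (c \<tau> j *\<^sub>R 0 + c' j *\<^sub>R axis j 1))) (at \<tau>)"
    by (intro has_vector_derivative_sum has_vector_derivative_scaleR assms has_vector_derivative_const)
  then show ?thesis by (simp add: vec_sum_axis[symmetric])
qed

lemma oproj_ex: "\<exists>w. w \<in> span S \<and> (\<forall>u\<in>span S. inner (v - w) u = 0)"
  for S :: "(real^'n::finite) set"
proof -
  obtain y z where "y \<in> span S" "\<And>w. w \<in> span S \<Longrightarrow> orthogonal z w" "v = y + z"
    using orthogonal_subspace_decomp_exists by blast
  then show ?thesis by (auto simp: orthogonal_def intro!: exI[of _ y])
qed

lemma oproj_unique:
  fixes S :: "(real^'n::finite) set"
  assumes "w1 \<in> span S" "\<forall>u\<in>span S. inner (v - w1) u = 0"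
    "w2 \<in> span S" "\<forall>u\<in>span S. inner (v - w2) u = 0"
  shows "w1 = w2"
proof -
  have d: "w1 - w2 \<in> span S" using assms by (simp add: span_diff)
  have "inner (v - w2) (w1 - w2) - inner (v - w1) (w1 - w2) = 0" using assms d by simp
  then have "inner (w1 - w2) (w1 - w2) = 0" by (simp add: inner_diff_left inner_diff_right algebra_simps)
  then show ?thesis by simp
qed

lemma oproj_prop:
  fixes S :: "(real^'n::finite) set"
  shows "oproj S v \<in> span S \<and> (\<forall>u\<in>span S. inner (v - oproj S v) u = 0)"
proof -
  have "\<exists>!w. w \<in> span S \<and> (\<forall>u\<in>span S. inner (v - w) u = 0)"
    using oproj_ex[of S v] oproj_unique[of _ S v] by blast
  then show ?thesis unfolding oproj_def by (rule theI')
qed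

lemma oproj_eqI:
  fixes S :: "(real^'n::finite) set"
  assumes "w \<in> span S" "\<forall>u\<in>span S. inner (v - w) u = 0"
  shows "oproj S v = w"
  using oproj_prop[of S v] oproj_unique[OF _ _ assms] by blast

lemma oproj_linear:
  fixes S :: "(real^'n::finite) set"
  shows "linear (oproj S)"
proof (rule linearI)
  fix x y
  show "oproj S (x + y) = oproj S x + oproj S y"
    using oproj_prop[of S x] oproj_prop[of S y]
    by (intro oproj_eqI) (auto simp: span_add inner_diff_left inner_add_left algebra_simps)
next
  fix c x
  show "oproj S (c *\<^sub>R x) = c *\<^sub>R oproj S x"
    using oproj_prop[of S x]
    by (intro oproj_eqI) (auto simp: span_mul span_scale inner_diff_left algebra_simps)
qed

lemma oproj_empty: "oproj {} v = (0::real^'n::finite)"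
  by (rule oproj_eqI) auto

lemma oproj_span: "span S = span T \<Longrightarrow> oproj S = oproj T"
  unfolding oproj_def by (simp add: fun_eq_iff)

lemma span_insert_shift:
  fixes S :: "(real^'n::finite) set"
  assumes "w \<in> span S"
  shows "span (insert a S) = span (insert (a - w) S)"
proof -
  have 1: "x + k *\<^sub>R w - k *\<^sub>R a \<in> span S" if "x - k *\<^sub>R a \<in> span S" for x k
  proof -
    have "x + k *\<^sub>R w - k *\<^sub>R a = (x - k *\<^sub>R a) + k *\<^sub>R w" by (simp add: algebra_simps)
    then show ?thesis using that assms by (metis span_add span_mul)
  qed
  have 2: "x - k *\<^sub>R a \<in> span S" if "x + k *\<^sub>R w - k *\<^sub>R a \<in> span S" for x k
  proof -
    have "x - k *\<^sub>R a = (x + k *\<^sub>R w - k *\<^sub>R a) - k *\<^sub>R w" by (simp add: algebra_simps)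
    then show ?thesis using that assms by (metis span_diff span_mul)
  qed
  show ?thesis by (auto simp: span_insert algebra_simps intro: 1 2)
qed

lemma span_insert_cong:
  fixes S :: "(real^'n::finite) set"
  shows "span S = span T \<Longrightarrow> span (insert c S) = span (insert c T)"
  by (simp add: span_insert)

definition Dk :: "('n::finite \<times> 'n) set \<Rightarrow> ('n \<Rightarrow> 'n \<Rightarrow> real \<Rightarrow> real) \<Rightarrow> ('n \<Rightarrow> real) \<Rightarrow> 'n \<Rightarrow> real \<Rightarrow> real^'n" where
  "Dk D g1 s k t = (\<chi> j. ((if j = k then 1 else 0) - (if k \<in> pa D j then g1 j k t else 0)) / s j)"

definition D2k :: "('n::finite \<times> 'n) set \<Rightarrow> ('n \<Rightarrow> 'n \<Rightarrow> real \<Rightarrow> real) \<Rightarrow> ('n \<Rightarrow> real) \<Rightarrow> 'n \<Rightarrow> real \<Rightarrow> real^'n" where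
  "D2k D g2 s k t = (\<chi> j. - (if k \<in> pa D j then g2 j k t else 0) / s j)"

lemma comp_deriv:
  fixes D :: "('n::finite \<times> 'n) set"
  assumes d1: "\<forall>j. \<forall>i\<in>pa D j. \<forall>x. (f j i has_real_derivative g1 j i x) (at x)"
  shows "((\<lambda>t. plsem_fun D mu f s (\<chi> l. if l = k then t else x $ l) $ j) has_real_derivative
     Dk D g1 s k \<tau> $ j) (at \<tau>)"
proof -
  have sd: "((\<lambda>t. \<Sum>i\<in>pa D j. f j i (if i = k then t else x $ i)) has_real_derivative
      (\<Sum>i\<in>pa D j. if i = k then g1 j i \<tau> else 0)) (at \<tau>)"
  proof (rule DERIV_sum)
    fix i assume i: "i \<in> pa D j"
    show "((\<lambda>t. f j i (if i = k then t else x $ i)) has_real_derivative (if i = k then g1 j i \<tau> else 0)) (at \<tau>)"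
      using d1 i by (cases "i = k") auto
  qed
  have se: "(\<Sum>i\<in>pa D j. if i = k then g1 j i \<tau> else 0) = (if k \<in> pa D j then g1 j k \<tau> else 0)"
    by (simp add: sum.delta')
  have xd: "((\<lambda>t. if j = k then t else x $ j) has_real_derivative (if j = k then 1 else 0)) (at \<tau>)"
    by (cases "j = k") (auto intro!: derivative_eq_intros)
  have "((\<lambda>t. ((if j = k then t else x $ j) - mu j - (\<Sum>i\<in>pa D j. f j i (if i = k then t else x $ i))) / s j)
     has_real_derivative ((if j = k then 1 else 0) - 0 - (\<Sum>i\<in>pa D j. if i = k then g1 j i \<tau> else 0)) / s j) (at \<tau>)"
    by (intro DERIV_cdivide DERIV_diff xd sd DERIV_const)
  then show ?thesis
    by (simp add: plsem_fun_def Dk_def se)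
qed

lemma pd_eq:
  fixes D :: "('n::finite \<times> 'n) set"
  assumes d1: "\<forall>j. \<forall>i\<in>pa D j. \<forall>x. (f j i has_real_derivative g1 j i x) (at x)"
  shows "pd k (plsem_fun D mu f s) x = Dk D g1 s k (x $ k)"
  unfolding pd_def vec_eq_iff
  using DERIV_imp_deriv[OF comp_deriv[OF d1]] by simp

lemma Dk_deriv:
  fixes D :: "('n::finite \<times> 'n) set"
  assumes d2: "\<forall>j. \<forall>i\<in>pa D j. \<forall>x. (g1 j i has_real_derivative g2 j i x) (at x)"
  shows "((\<lambda>t. Dk D g1 s k t $ j) has_real_derivative D2k D g2 s k \<tau> $ j) (at \<tau>)"
proof (cases "k \<in> pa D j")
  case True
  have g: "(g1 j k has_real_derivative g2 j k \<tau>) (at \<tau>)" using d2 True by blast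
  have "((\<lambda>t. ((if j = k then 1 else 0) - g1 j k t) / s j) has_real_derivative (0 - g2 j k \<tau>) / s j) (at \<tau>)"
    by (intro DERIV_cdivide DERIV_diff DERIV_const g)
  then show ?thesis using True unfolding Dk_def D2k_def by simp
next
  case False
  then show ?thesis unfolding Dk_def D2k_def by (auto intro!: derivative_eq_intros)
qed

lemma pd2_eq:
  fixes D :: "('n::finite \<times> 'n) set"
  assumes d1: "\<forall>j. \<forall>i\<in>pa D j. \<forall>x. (f j i has_real_derivative g1 j i x) (at x)"
  assumes d2: "\<forall>j. \<forall>i\<in>pa D j. \<forall>x. (g1 j i has_real_derivative g2 j i x) (at x)"
  shows "pd2 k (plsem_fun D mu f s) x = D2k D g2 s k (x $ k)"
  unfolding pd2_def pd_def[of k "pd k _"] vec_eq_iff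
  using DERIV_imp_deriv[OF Dk_deriv[OF d2]] by (simp add: pd_eq[OF d1])

lemma Dk_vderiv:
  fixes D :: "('n::finite \<times> 'n) set"
  assumes d2: "\<forall>j. \<forall>i\<in>pa D j. \<forall>x. (g1 j i has_real_derivative g2 j i x) (at x)"
  shows "(Dk D g1 s k has_vector_derivative D2k D g2 s k \<tau>) (at \<tau>)"
proof -
  have "((\<lambda>t. \<chi> j. Dk D g1 s k t $ j) has_vector_derivative (\<chi> j. D2k D g2 s k \<tau> $ j)) (at \<tau>)"
    by (rule vec_has_vector_derivative) (rule Dk_deriv[OF d2])
  then show ?thesis by simp
qed
theorem mainTheorem14:
  fixes M :: "'a measure" and D :: "('n::finite \<times> 'n) set"
    and mu s :: "'n \<Rightarrow> real" and f :: "'n \<Rightarrow> 'n \<Rightarrow> real \<Rightarrow> real"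
    and eps X :: "'n \<Rightarrow> 'a \<Rightarrow> real" and \<sigma> :: "'n \<Rightarrow> nat"
  assumes "plsem M D mu f s eps X"
    and "bij_betw \<sigma> UNIV {1..CARD('n)}"
    and "\<forall>x. \<forall>i\<in>{1..CARD('n)}.
           pd2 (inv_into UNIV \<sigma> i) (plsem_fun D mu f s) x
           - Pi_sigma \<sigma> (plsem_fun D mu f s) (i + 1) x
               (pd2 (inv_into UNIV \<sigma> i) (plsem_fun D mu f s) x) = 0"
  shows "\<forall>i\<in>{1..CARD('n)}. \<forall>x y.
           matrix (Pi_sigma \<sigma> (plsem_fun D mu f s) (i + 1) x)
             = matrix (Pi_sigma \<sigma> (plsem_fun D mu f s) (i + 1) y)
         \<and> pd (inv_into UNIV \<sigma> i) (plsem_fun D mu f s) x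
             - Pi_sigma \<sigma> (plsem_fun D mu f s) (i + 1) x
                 (pd (inv_into UNIV \<sigma> i) (plsem_fun D mu f s) x)
           = pd (inv_into UNIV \<sigma> i) (plsem_fun D mu f s) y
             - Pi_sigma \<sigma> (plsem_fun D mu f s) (i + 1) y
                 (pd (inv_into UNIV \<sigma> i) (plsem_fun D mu f s) y)"
proof -
  let ?F = "plsem_fun D mu f s"
  let ?p = "CARD('n)"
  define iv where "iv = inv_into UNIV \<sigma>"
  define SS where "SS m x = {pd (iv k) ?F x | k. m \<le> k \<and> k \<le> ?p}" for m x
  define v where "v i x = pd (iv i) ?F x - Pi_sigma \<sigma> ?F (i + 1) x (pd (iv i) ?F x)" for i x
  have C2: "\<forall>j. \<forall>i\<in>pa D j. C2 (f j i)" using assms(1) unfolding plsem_def by blast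
  have "\<forall>j i. \<exists>g'. \<exists>g''. i \<in> pa D j \<longrightarrow> (\<forall>x. (f j i has_real_derivative g' x) (at x)) \<and> (\<forall>x. (g' has_real_derivative g'' x) (at x))"
    using C2 unfolding C2_def by blast
  then obtain g1 g2 where gg: "\<forall>j i. i \<in> pa D j \<longrightarrow> (\<forall>x. (f j i has_real_derivative g1 j i x) (at x)) \<and> (\<forall>x. (g1 j i has_real_derivative g2 j i x) (at x))"
    by metis
  have d1: "\<forall>j. \<forall>i\<in>pa D j. \<forall>x. (f j i has_real_derivative g1 j i x) (at x)" using gg by blast
  have d2: "\<forall>j. \<forall>i\<in>pa D j. \<forall>x. (g1 j i has_real_derivative g2 j i x) (at x)" using gg by blast
  have PiE: "Pi_sigma \<sigma> ?F (i + 1) x = oproj (SS (i + 1) x)" if "i \<in> {1..?p}" for i x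
  proof (cases "i = ?p")
    case True
    then have "SS (i + 1) x = {}" unfolding SS_def by auto
    then show ?thesis using True by (simp add: Pi_sigma_def fun_eq_iff oproj_empty)
  next
    case False
    then show ?thesis unfolding Pi_sigma_def SS_def iv_def by simp
  qed
  have Vstep: "\<forall>x y. v i x = v i y"
    if i: "i \<in> {1..?p}" and sp: "\<forall>x y. span (SS (i + 1) x) = span (SS (i + 1) y)" for i
  proof -
    define k where "k = iv i"
    define P where "P = oproj (SS (i + 1) 0)"
    have PP: "Pi_sigma \<sigma> ?F (i + 1) x = P" for x
      using PiE[OF i] sp oproj_span unfolding P_def by metis
    have bl: "bounded_linear P" unfolding P_def using oproj_linear linear_conv_bounded_linear by blast
    define g where "g t = Dk D g1 s k t - P (Dk D g1 s k t)" for t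
    have "(g has_vector_derivative 0) (at t within UNIV)" for t
    proof -
      have "(g has_vector_derivative (D2k D g2 s k t - P (D2k D g2 s k t))) (at t)"
        unfolding g_def
        by (intro has_vector_derivative_diff Dk_vderiv[OF d2] bounded_linear.has_vector_derivative[OF bl])
      moreover
      define x' where "x' = (\<chi> l. if l = k then t else (0::real))"
      have "pd2 k ?F x' - Pi_sigma \<sigma> ?F (i + 1) x' (pd2 k ?F x') = 0"
        using assms(3) i unfolding k_def iv_def by blast
      then have "D2k D g2 s k t - P (D2k D g2 s k t) = 0"
        unfolding PP pd2_eq[OF d1 d2] by (simp add: x'_def)
      ultimately show ?thesis by simp
    qed
    then obtain c where c: "\<And>t. t \<in> UNIV \<Longrightarrow> g t = c"
      using has_vector_derivative_zero_constant[of UNIV g] by blast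
    have "v i x = g (x $ k)" for x
      unfolding v_def g_def k_def PP pd_eq[OF d1] by simp
    then show ?thesis using c by simp
  qed
  have Sstep: "\<forall>x y. span (SS i x) = span (SS i y)"
    if i: "i \<in> {1..?p}" and sp: "\<forall>x y. span (SS (i + 1) x) = span (SS (i + 1) y)" for i
  proof -
    have V: "\<forall>x y. v i x = v i y" using Vstep[OF i sp] .
    have ins: "SS i x = insert (pd (iv i) ?F x) (SS (i + 1) x)" for x
      unfolding SS_def using i by (auto simp: le_Suc_eq) (metis le_antisym not_less_eq_eq)
    have e: "span (SS i x) = span (insert (v i x) (SS (i + 1) x))" for x
    proof -
      have "Pi_sigma \<sigma> ?F (i + 1) x (pd (iv i) ?F x) \<in> span (SS (i + 1) x)"
        using PiE[OF i] oproj_prop by metis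
      then show ?thesis unfolding ins v_def by (rule span_insert_shift)
    qed
    show ?thesis
    proof (intro allI)
      fix x y
      show "span (SS i x) = span (SS i y)"
        unfolding e V[rule_format, of x y] using sp span_insert_cong by blast
    qed
  qed
  have all: "\<forall>x y. span (SS (?p + 1 - n) x) = span (SS (?p + 1 - n) y)" if "n \<le> ?p" for n
    using that
  proof (induction n)
    case 0
    have "SS (?p + 1) x = {}" for x unfolding SS_def by auto
    then show ?case by simp
  next
    case (Suc n)
    have i: "?p - n \<in> {1..?p}" using Suc.prems by auto
    have "?p + 1 - n = (?p - n) + 1" using Suc.prems by auto
    then have "\<forall>x y. span (SS ((?p - n) + 1) x) = span (SS ((?p - n) + 1) y)"
      using Suc by simp
    from Sstep[OF i this] show ?case using Suc.prems by (simp add: Suc_diff_le)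
  qed
  show ?thesis
  proof (intro ballI allI conjI)
    fix i x y assume i: "i \<in> {1..?p}"
    have sp: "\<forall>x y. span (SS (i + 1) x) = span (SS (i + 1) y)"
      using all[of "?p - i"] i by auto
    show "matrix (Pi_sigma \<sigma> ?F (i + 1) x) = matrix (Pi_sigma \<sigma> ?F (i + 1) y)"
      using PiE[OF i] sp oproj_span by metis
    show "pd (inv_into UNIV \<sigma> i) ?F x - Pi_sigma \<sigma> ?F (i + 1) x (pd (inv_into UNIV \<sigma> i) ?F x) =
          pd (inv_into UNIV \<sigma> i) ?F y - Pi_sigma \<sigma> ?F (i + 1) y (pd (inv_into UNIV \<sigma> i) ?F y)"
      using Vstep[OF i sp] unfolding v_def iv_def by blast
  qed
qed

end
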